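(* Let $A\in\mathbb{R}_+^{m\times n}$, $y\in\mathbb{Z}_+^m$, $\beta>0$, and $F(f)=\mathbb{1}^TAf-\sum_{i=1}^m y_i\log(e_i^TAf+\beta)$. Let $\tau>0$ and $\mathrm{pen}:\mathbb{R}^n\to\mathbb{R}$, and set $\rho(f)=\tau\,\mathrm{pen}(f)+\delta_+(f)$, where $\delta_+(f)=0$ if $f\ge 0$ (componentwise) and $\delta_+(f)=+\infty$ otherwise. Assume: (A1) $F$ is proper convex and Lipschitz continuously differentiable on $\mathbb{R}_+^n$; (A2) $\rho$ is proper convex and continuous on $\mathbb{R}_+^n$. Let $\alpha_{\min}>0$. Consider sequences $\{f^k\}\subset\mathbb{R}_+^n$ and $\{\alpha_k\}\subset(0,\infty)$ such that for each $k$, $$f^{k+1}\in\arg\min_{f\in\mathbb{R}^n}\; (f-f^k)^T\nabla F(f^k)+\tfrac{\alpha_k}{2}\|f-f^k\|_2^2+\rho(f).$$ Suppose $\bar f\in\mathbb{R}_+^n$ is not critical for $\min_f F(f)+\rho(f)$, i.e. $0\notin\nabla F(\bar f)+\partial\rho(\bar f)$. Then for any $\bar\alpha\ge\alpha_{\min}$ there exists $\epsilon>0$ such that for any subsequence $\{f^{k_j}\}_{j\in\mathbb{Z}_+}$ with $\lim_{j\to\infty}f^{k_j}=\bar f$, $f^{k_j}\in\mathbb{R}_+^n$ for all $j$, and $\alpha_{\min}\le\alpha_{k_j}\le\bar\alpha$, we have $\|f^{k_j+1}-f^{k_j}\|_2\ge\epsilon$ for all $j$ sufficiently large.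
   Context: $\partial\rho$ denotes the subdifferential (set of subgradients) of the convex function $\rho$. $\mathbb{1}$ is the all-ones vector and $e_i$ the $i$-th canonical basis vector of $\mathbb{R}^m$. *)

theory Defs
  imports "HOL-Analysis.Analysis"
begin

definition nonneg :: "(real ^ 'n) set" where
  "nonneg = {f. \<forall>j. 0 \<le> f $ j}"

definition delta_plus :: "real ^ 'n \<Rightarrow> ereal" where
  "delta_plus f = (if f \<in> nonneg then 0 else \<infinity>)"

definition poissonF :: "real ^ 'n ^ 'm \<Rightarrow> ('m \<Rightarrow> nat) \<Rightarrow> real \<Rightarrow> real ^ 'n \<Rightarrow> real" where
  "poissonF A y \<beta> f =
     (\<Sum>i\<in>UNIV. (A *v f) $ i) - (\<Sum>i\<in>UNIV. real (y i) * ln ((A *v f) $ i + \<beta>))"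

definition subdiff :: "('a::real_inner \<Rightarrow> ereal) \<Rightarrow> 'a \<Rightarrow> 'a set" where
  "subdiff g x = {v. \<forall>z. g z \<ge> g x + ereal (inner v (z - x))}"

definition is_argmin_on_all :: "('a \<Rightarrow> ereal) \<Rightarrow> 'a \<Rightarrow> bool" where
  "is_argmin_on_all \<Phi> x \<longleftrightarrow> (\<forall>z. \<Phi> x \<le> \<Phi> z)"

end

theory Submission
  imports Defs
begin

lemma nonneg_convex: "convex (nonneg :: (real ^ 'n) set)"
  unfolding convex_def nonneg_def by (auto intro!: add_nonneg_nonneg mult_nonneg_nonneg)

lemma key_convex:
  fixes P :: "real ^ 'n \<Rightarrow> real" and G fbar :: "real ^ 'n" and ab :: real
  assumes cv: "convex_on nonneg P" and fb: "fbar \<in> nonneg" and ab: "ab \<ge> 0"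
    and H: "\<forall>z\<in>nonneg. P fbar \<le> inner (z - fbar) G + ab / 2 * (norm (z - fbar))\<^sup>2 + P z"
    and z: "z \<in> nonneg"
  shows "P fbar - inner (z - fbar) G \<le> P z"
proof (rule ccontr)
  assume nt: "\<not> P fbar - inner (z - fbar) G \<le> P z"
  define d where "d = P z - P fbar + inner (z - fbar) G"
  have dneg: "d < 0" using nt unfolding d_def by simp
  define N where "N = (norm (z - fbar))\<^sup>2"
  have N0: "N \<ge> 0" unfolding N_def by simp
  define t where "t = min 1 (- d / (ab * N + 1))"
  have abN: "ab * N \<ge> 0" using ab N0 by simp
  have t0: "t > 0" unfolding t_def using dneg abN by (auto simp: field_simps)
  have t1: "t \<le> 1" unfolding t_def by simp
  have tle: "t \<le> - d / (ab * N + 1)" unfolding t_def by simp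
  define zt where "zt = (1 - t) *\<^sub>R fbar + t *\<^sub>R z"
  have ztin: "zt \<in> nonneg" unfolding zt_def
    using nonneg_convex[unfolded convex_def] fb z t0 t1 by auto
  have Pzt: "P zt \<le> (1 - t) * P fbar + t * P z"
    unfolding zt_def using convex_onD[OF cv] t0 t1 fb z by auto
  have ztd: "zt - fbar = t *\<^sub>R (z - fbar)" unfolding zt_def by (simp add: algebra_simps)
  have "P fbar \<le> inner (zt - fbar) G + ab / 2 * (norm (zt - fbar))\<^sup>2 + P zt"
    using H ztin by blast
  also have "\<dots> = t * inner (z - fbar) G + ab / 2 * t^2 * N + P zt"
    unfolding ztd N_def using t0 by (simp add: power_mult_distrib)
  also have "\<dots> \<le> t * inner (z - fbar) G + ab / 2 * t^2 * N + (1 - t) * P fbar + t * P z"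
    using Pzt by simp
  finally have "0 \<le> t * d + ab / 2 * t^2 * N" unfolding d_def by (simp add: algebra_simps)
  hence "0 \<le> t * (d + ab / 2 * t * N)" by (simp add: algebra_simps power2_eq_square)
  hence h: "0 \<le> d + ab / 2 * t * N" using t0 by (simp add: zero_le_mult_iff)
  have "t * (ab * N + 1) \<le> - d" using tle abN by (simp add: field_simps)
  hence "ab * t * N < - d" using t0 by (simp add: algebra_simps)
  moreover have "0 \<le> ab * N * t" using abN t0 by simp
  moreover have "ab / 2 * t * N = (ab*N*t)/2" "ab*t*N = ab*N*t" by (simp_all add: algebra_simps)
  ultimately show False using h by linarith
qed

theorem lemma2:
  fixes A :: "real ^ 'n ^ 'm" and y :: "'m \<Rightarrow> nat" and \<beta> \<tau> \<alpha>min :: real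
    and pen :: "real ^ 'n \<Rightarrow> real"
    and gF :: "real ^ 'n \<Rightarrow> real ^ 'n"
    and f :: "nat \<Rightarrow> real ^ 'n" and \<alpha> :: "nat \<Rightarrow> real" and fbar :: "real ^ 'n"
  defines "F \<equiv> poissonF A y \<beta>"
  defines "\<rho> \<equiv> (\<lambda>x. ereal (\<tau> * pen x) + delta_plus x)"
  assumes A_nonneg: "\<forall>i j. 0 \<le> A $ i $ j"
    and beta_pos: "\<beta> > 0"
    and tau_pos: "\<tau> > 0"
    and A1_convex: "convex_on nonneg F"
    and A1_grad: "\<forall>x\<in>nonneg. (F has_derivative (\<lambda>h. inner h (gF x))) (at x within nonneg)"
    and A1_lipschitz: "\<exists>L. \<forall>x\<in>nonneg. \<forall>z\<in>nonneg. norm (gF x - gF z) \<le> L * norm (x - z)"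
    and A2_convex: "convex_on nonneg (\<lambda>x. \<tau> * pen x)"
    and A2_cont: "continuous_on nonneg (\<lambda>x. \<tau> * pen x)"
    and amin_pos: "\<alpha>min > 0"
    and f_nonneg: "\<forall>k. f k \<in> nonneg"
    and alpha_pos: "\<forall>k. \<alpha> k > 0"
    and step: "\<forall>k. is_argmin_on_all
        (\<lambda>x. ereal (inner (x - f k) (gF (f k)) + \<alpha> k / 2 * (norm (x - f k))\<^sup>2) + \<rho> x) (f (Suc k))"
    and fbar_nonneg: "fbar \<in> nonneg"
    and not_critical: "- gF fbar \<notin> subdiff \<rho> fbar"
  shows "\<forall>\<alpha>bar \<ge> \<alpha>min. \<exists>\<epsilon>>0. \<forall>kj :: nat \<Rightarrow> nat.
           (strict_mono kj \<and> ((\<lambda>j. f (kj j)) \<longlonglongrightarrow> fbar) \<and>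
            (\<forall>j. f (kj j) \<in> nonneg) \<and> (\<forall>j. \<alpha>min \<le> \<alpha> (kj j) \<and> \<alpha> (kj j) \<le> \<alpha>bar))
           \<longrightarrow> (\<forall>\<^sub>F j in sequentially. norm (f (Suc (kj j)) - f (kj j)) \<ge> \<epsilon>)"
proof (intro allI impI, rule ccontr)
  fix ab assume abge: "ab \<ge> \<alpha>min"
  hence ab0: "ab \<ge> 0" using amin_pos by simp
  define P where "P = (\<lambda>x. \<tau> * pen x)"
  define G where "G = gF fbar"
  assume "\<not> (\<exists>\<epsilon>>0. \<forall>kj :: nat \<Rightarrow> nat.
           (strict_mono kj \<and> ((\<lambda>j. f (kj j)) \<longlonglongrightarrow> fbar) \<and>
            (\<forall>j. f (kj j) \<in> nonneg) \<and> (\<forall>j. \<alpha>min \<le> \<alpha> (kj j) \<and> \<alpha> (kj j) \<le> ab))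
           \<longrightarrow> (\<forall>\<^sub>F j in sequentially. norm (f (Suc (kj j)) - f (kj j)) \<ge> \<epsilon>))"
  hence neg: "\<And>e. e > 0 \<Longrightarrow> \<exists>kj :: nat \<Rightarrow> nat. ((\<lambda>j. f (kj j)) \<longlonglongrightarrow> fbar) \<and>
            (\<forall>j. \<alpha> (kj j) \<le> ab) \<and>
            \<not> (\<forall>\<^sub>F j in sequentially. norm (f (Suc (kj j)) - f (kj j)) \<ge> e)"
    by blast
  have ex: "\<exists>k. norm (f k - fbar) < inverse (real (Suc n)) \<and>
      norm (f (Suc k) - f k) < inverse (real (Suc n)) \<and> \<alpha> k \<le> ab" for n
  proof -
    define e where "e = inverse (real (Suc n))"
    have e0: "e > 0" unfolding e_def by simp
    obtain kj :: "nat \<Rightarrow> nat" where lim: "(\<lambda>j. f (kj j)) \<longlonglongrightarrow> fbar"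
      and al: "\<forall>j. \<alpha> (kj j) \<le> ab"
      and nev: "\<not> (\<forall>\<^sub>F j in sequentially. norm (f (Suc (kj j)) - f (kj j)) \<ge> e)"
      using neg[OF e0] by blast
    have "\<forall>\<^sub>F j in sequentially. dist (f (kj j)) fbar < e"
      using tendstoD[OF lim e0] .
    then obtain N where N: "\<And>j. j \<ge> N \<Longrightarrow> dist (f (kj j)) fbar < e"
      unfolding eventually_sequentially by blast
    from nev obtain j where j: "j \<ge> N" "\<not> norm (f (Suc (kj j)) - f (kj j)) \<ge> e"
      unfolding eventually_sequentially by (meson not_le)
    show ?thesis
      using N[OF j(1)] j(2) al unfolding e_def dist_norm by (intro exI[of _ "kj j"]) auto
  qed
  then obtain K where K: "\<And>n. norm (f (K n) - fbar) < inverse (real (Suc n)) \<and>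
      norm (f (Suc (K n)) - f (K n)) < inverse (real (Suc n)) \<and> \<alpha> (K n) \<le> ab"
    by metis
  have inv0: "(\<lambda>n. inverse (real (Suc n))) \<longlonglongrightarrow> 0" by (rule LIMSEQ_inverse_real_of_nat)
  have d1: "(\<lambda>n. f (K n) - fbar) \<longlonglongrightarrow> 0"
    by (rule Lim_null_comparison[OF _ inv0]) (intro always_eventually allI, meson K less_imp_le)
  have d2: "(\<lambda>n. f (Suc (K n)) - f (K n)) \<longlonglongrightarrow> 0"
    by (rule Lim_null_comparison[OF _ inv0]) (intro always_eventually allI, meson K less_imp_le)
  have l1: "(\<lambda>n. f (K n)) \<longlonglongrightarrow> fbar"
    using tendsto_add[OF d1 tendsto_const[of fbar]] by simp
  have l2: "(\<lambda>n. f (Suc (K n))) \<longlonglongrightarrow> fbar"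
    using tendsto_add[OF d2 l1] by simp
  obtain L where L: "\<forall>x\<in>nonneg. \<forall>z\<in>nonneg. norm (gF x - gF z) \<le> L * norm (x - z)"
    using A1_lipschitz by blast
  have lL: "(\<lambda>n. L * norm (f (K n) - fbar)) \<longlonglongrightarrow> 0"
    using tendsto_mult[OF tendsto_const[of L] tendsto_norm[OF d1]] by simp
  have "(\<lambda>n. gF (f (K n)) - G) \<longlonglongrightarrow> 0"
    by (rule Lim_null_comparison[OF _ lL]) (use L f_nonneg fbar_nonneg in \<open>auto simp: G_def\<close>)
  hence lg: "(\<lambda>n. gF (f (K n))) \<longlonglongrightarrow> G"
    using tendsto_add[OF _ tendsto_const[of G]] by fastforce
  have lp: "(\<lambda>n. P (f (Suc (K n)))) \<longlonglongrightarrow> P fbar"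
    unfolding P_def
    by (rule continuous_on_tendsto_compose[OF A2_cont l2 fbar_nonneg]) (use f_nonneg in auto)
  have H: "\<forall>z\<in>nonneg. P fbar \<le> inner (z - fbar) G + ab / 2 * (norm (z - fbar))\<^sup>2 + P z"
  proof
    fix z :: "real ^ 'n" assume z: "z \<in> nonneg"
    have ineq: "inner (f (Suc (K n)) - f (K n)) (gF (f (K n))) + P (f (Suc (K n)))
       \<le> inner (z - f (K n)) (gF (f (K n))) + ab / 2 * (norm (z - f (K n)))\<^sup>2 + P z" for n
    proof -
      let ?k = "K n"
      have "ereal (inner (f (Suc ?k) - f ?k) (gF (f ?k)) + \<alpha> ?k / 2 * (norm (f (Suc ?k) - f ?k))\<^sup>2)
            + \<rho> (f (Suc ?k))
          \<le> ereal (inner (z - f ?k) (gF (f ?k)) + \<alpha> ?k / 2 * (norm (z - f ?k))\<^sup>2) + \<rho> z"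
        using step unfolding is_argmin_on_all_def by blast
      hence r: "inner (f (Suc ?k) - f ?k) (gF (f ?k)) + \<alpha> ?k / 2 * (norm (f (Suc ?k) - f ?k))\<^sup>2
            + P (f (Suc ?k))
          \<le> inner (z - f ?k) (gF (f ?k)) + \<alpha> ?k / 2 * (norm (z - f ?k))\<^sup>2 + P z"
        using z f_nonneg unfolding \<rho>_def delta_plus_def P_def by simp
      have a1: "0 \<le> \<alpha> ?k / 2 * (norm (f (Suc ?k) - f ?k))\<^sup>2"
        using alpha_pos by (simp add: less_imp_le)
      have a2: "\<alpha> ?k / 2 * (norm (z - f ?k))\<^sup>2 \<le> ab / 2 * (norm (z - f ?k))\<^sup>2"
        using K[of n] by (intro mult_right_mono) auto
      show ?thesis using r a1 a2 by linarith
    qed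
    have la: "(\<lambda>n. inner (z - f (K n)) (gF (f (K n))) + ab / 2 * (norm (z - f (K n)))\<^sup>2 + P z)
        \<longlonglongrightarrow> inner (z - fbar) G + ab / 2 * (norm (z - fbar))\<^sup>2 + P z"
      by (intro tendsto_intros l1 lg)
    have lb: "(\<lambda>n. inner (f (Suc (K n)) - f (K n)) (gF (f (K n))) + P (f (Suc (K n))))
        \<longlonglongrightarrow> inner 0 G + P fbar"
      by (intro tendsto_intros d2 lg lp)
    show "P fbar \<le> inner (z - fbar) G + ab / 2 * (norm (z - fbar))\<^sup>2 + P z"
      using LIMSEQ_le[OF lb la] ineq by simp
  qed
  have cv: "convex_on nonneg P" using A2_convex unfolding P_def .
  have "- gF fbar \<in> subdiff \<rho> fbar"
    unfolding subdiff_def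
  proof (clarify)
    fix z :: "real ^ 'n"
    show "\<rho> fbar + ereal (inner (- gF fbar) (z - fbar)) \<le> \<rho> z"
    proof (cases "z \<in> nonneg")
      case True
      have "P fbar - inner (z - fbar) G \<le> P z"
        by (rule key_convex[OF cv fbar_nonneg ab0 H True])
      thus ?thesis using True fbar_nonneg
        unfolding \<rho>_def delta_plus_def P_def G_def by (simp add: inner_commute)
    next
      case False
      thus ?thesis unfolding \<rho>_def delta_plus_def by simp
    qed
  qed
  thus False using not_critical by blast
qed

end
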